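(* Let $n\ge 3$, $0<m<\frac{n-2}{n}$, $m\ne\frac{n-2}{n+2}$, $\lambda>0$, $\beta>0$. Let $v$ be the radially symmetric solution described in the context, $w(s)=r^2v(r)^{1-m}$ with $s=\log r$, $h(s)=w(s)-\frac{2(n-1)(n-2-nm)}{(1-m)\beta}s$, and $h_1(s)=h(s)+\frac{(n-1)[n-2-(n+2)m]}{(1-m)\beta}\log s$. Then the limit $K(\lambda,\beta):=\lim_{s\to\infty}h_1(s)$ exists in $\mathbb{R}$, and \[ h_1(s)=K(\lambda,\beta)+\frac{(n-1)(n-2-(n+2)m)^2}{2(n-2-nm)(1-m)\beta}\cdot\frac{1+\log s}{s}+o\Big(\frac{1+\log s}{s}\Big)\quad\text{as }s\to\infty. \]
   Context: $v=v(r)$, $r=|x|$, is the unique radially symmetric positive classical solution of $\frac{n-1}{m}\Delta v^m+\frac{2\beta}{1-m}v+\beta x\cdot\nabla v=0$ in $\mathbb{R}^n$ with $v(0)=\lambda$. *)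

theory Defs
  imports "HOL-Analysis.Analysis" "HOL-Library.Landau_Symbols"
begin

definition classical_sol ::
  "real \<Rightarrow> real \<Rightarrow> (real^'n \<Rightarrow> real) \<Rightarrow> bool" where
  "classical_sol m \<beta> V \<longleftrightarrow>
     (\<exists>DV DU (D2U :: real^'n \<Rightarrow> real^'n^'n).
        continuous_on UNIV V \<and> continuous_on UNIV DV \<and>
        continuous_on UNIV DU \<and> continuous_on UNIV D2U \<and>
        (\<forall>x. (V has_derivative (\<lambda>h. DV x \<bullet> h)) (at x)) \<and>
        (\<forall>x. ((\<lambda>y. V y powr m) has_derivative (\<lambda>h. DU x \<bullet> h)) (at x)) \<and>
        (\<forall>x. (DU has_derivative (\<lambda>h. D2U x *v h)) (at x)) \<and>
        (\<forall>x. (real CARD('n) - 1) / m * (\<Sum>i\<in>UNIV. D2U x $ i $ i)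
              + 2 * \<beta> / (1 - m) * V x + \<beta> * (x \<bullet> DV x) = 0))"

end

theory Submission
  imports Defs "HOL-Real_Asymp.Real_Asymp"
begin

lemma barrier:
  fixes f f' :: "real \<Rightarrow> real"
  assumes der: "\<And>t. t \<ge> a \<Longrightarrow> (f has_real_derivative f' t) (at t)"
    and fa: "f a < 0"
    and bd: "\<And>t. t \<ge> a \<Longrightarrow> f t = 0 \<Longrightarrow> f' t < 0"
    and t: "t \<ge> a"
  shows "f t < 0"
proof (rule ccontr)
  assume "\<not> f t < 0"
  hence ft: "f t \<ge> 0" by simp
  have cont: "continuous_on {a..t} f"
    using der by (meson DERIV_continuous atLeastAtMost_iff continuous_at_imp_continuous_on)
  obtain z where z: "z \<in> {a..t}" "f z = 0"
    using IVT'[of f a 0 t] fa ft t cont by auto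
  define S where "S = {x \<in> {a..t}. f x = 0}"
  have S_ne: "S \<noteq> {}" using z S_def by auto
  have Sc: "closed S" unfolding S_def by (rule continuous_closed_preimage_constant[OF cont]) auto
  have Sb: "bdd_below S" unfolding S_def by (auto intro: bdd_belowI[of _ a])
  define t0 where "t0 = Inf S"
  have t0S: "t0 \<in> S" using closed_contains_Inf[OF S_ne Sb Sc] t0_def by simp
  hence t0: "a \<le> t0" "t0 \<le> t" "f t0 = 0" unfolding S_def by auto
  have t0a: "t0 > a" using t0 fa by (cases "t0 = a") auto
  have below: "f x < 0" if ax: "a \<le> x" "x < t0" for x
  proof (rule ccontr)
    assume "\<not> f x < 0"
    then obtain y where "y \<in> {a..x}" "f y = 0"
    proof -
      have "x \<le> t" using ax t0 by auto
      hence "continuous_on {a..x} f" using continuous_on_subset[OF cont, of "{a..x}"] by auto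
      thus ?thesis using IVT'[of f a 0 x] fa ax \<open>\<not> f x < 0\<close> by (auto intro: that)
    qed
    hence "y \<in> S" using ax t0 unfolding S_def by auto
    hence "t0 \<le> y" unfolding t0_def using Sb by (simp add: cInf_lower)
    thus False using \<open>y \<in> {a..x}\<close> ax by auto
  qed
  obtain d where d: "d > 0" "\<forall>h>0. h < d \<longrightarrow> f t0 < f (t0 - h)"
    using DERIV_neg_dec_left[OF der[of t0] bd[of t0]] t0 by auto
  define h where "h = min d (t0 - a) / 2"
  have "h > 0" "h < d" "h \<le> t0 - a" using d t0a unfolding h_def by auto
  hence "f t0 < f (t0 - h)" using d by auto
  moreover have "f (t0 - h) < 0" using below[of "t0 - h"] \<open>h>0\<close> \<open>h \<le> t0 - a\<close> by auto
  ultimately show False using t0 by simp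
qed

lemma deriv_ge:
  fixes f f' :: "real \<Rightarrow> real"
  assumes ab: "a \<le> b" and der: "\<And>x. a \<le> x \<Longrightarrow> x \<le> b \<Longrightarrow> (f has_real_derivative f' x) (at x)"
    and c: "\<And>x. a \<le> x \<Longrightarrow> x \<le> b \<Longrightarrow> f' x \<ge> c"
  shows "f b - f a \<ge> c * (b - a)"
proof -
  have "(\<lambda>x. f x - c * x) a \<le> (\<lambda>x. f x - c * x) b"
  proof (rule DERIV_nonneg_imp_increasing_open[OF ab])
    fix x assume "a < x" "x < b"
    thus "\<exists>y. ((\<lambda>x. f x - c * x) has_real_derivative y) (at x) \<and> 0 \<le> y"
      using der[of x] c[of x] by (intro exI[of _ "f' x - c"]) (auto intro!: derivative_eq_intros)
  next
    have "continuous_on {a..b} f"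
      using der by (meson DERIV_continuous atLeastAtMost_iff continuous_at_imp_continuous_on)
    thus "continuous_on {a..b} (\<lambda>x. f x - c * x)" by (intro continuous_intros)
  qed
  thus ?thesis by (simp add: algebra_simps)
qed

lemma deriv_le:
  fixes f f' :: "real \<Rightarrow> real"
  assumes ab: "a \<le> b" and der: "\<And>x. a \<le> x \<Longrightarrow> x \<le> b \<Longrightarrow> (f has_real_derivative f' x) (at x)"
    and c: "\<And>x. a \<le> x \<Longrightarrow> x \<le> b \<Longrightarrow> f' x \<le> c"
  shows "f b - f a \<le> c * (b - a)"
proof -
  have "(-c) * (b - a) \<le> (\<lambda>x. - f x) b - (\<lambda>x. - f x) a"
    by (rule deriv_ge[OF ab, of _ "\<lambda>x. - f' x"]) (use der c in \<open>auto intro!: derivative_eq_intros\<close>)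
  thus ?thesis by simp
qed

lemma phi_smallo: "(\<lambda>s::real. 1 / s + (ln s)^2 / s^2) \<in> o[at_top](\<lambda>s. (1 + ln s) / s)"
proof (rule sum_in_smallo)
  show "(\<lambda>s::real. 1 / s) \<in> o[at_top](\<lambda>s. (1 + ln s) / s)" by real_asymp
  show "(\<lambda>s::real. (ln s)^2 / s^2) \<in> o[at_top](\<lambda>s. (1 + ln s) / s)" by real_asymp
qed

lemma bigo_ev:
  fixes f \<phi> :: "real \<Rightarrow> real"
  assumes "M \<ge> 0" "\<And>s. s \<ge> S \<Longrightarrow> \<bar>f s\<bar> \<le> M * \<phi> s" "\<And>s. s \<ge> S \<Longrightarrow> \<phi> s \<ge> 0"
  shows "f \<in> O[at_top](\<phi>)"
proof (rule bigoI[of _ M])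
  show "eventually (\<lambda>x. norm (f x) \<le> M * norm (\<phi> x)) at_top"
    unfolding eventually_at_top_linorder using assms by (intro exI[of _ S]) auto
qed

lemma ident_alg:
  fixes aa s H1 E B la L G0 X ls Ei :: real
  assumes "aa \<noteq> 0" "s \<noteq> 0" "H1 = E - B*la - B*L - G0" "X = (H1 - B*ls)/(aa * s)"
  shows "H1 - (Ei - B*la) - (B^2/aa)*(1+ls)/s = (E - Ei) - (B^2/aa)/s - B*H1/(aa * s) - B*(L - X) - G0"
  unfolding assms(4) unfolding assms(3) using assms(1,2) by (simp add: field_simps power2_eq_square)

locale odesys =
  fixes w g :: "real \<Rightarrow> real" and A0 c1 q \<kappa> s1 :: real
  assumes kpos: "\<kappa> > 0" and qpos: "q > 0" and A0def: "A0 = 2*c1 + 4*q" and cpos: "c1 + 2*q > 0"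
    and wpos: "\<And>s. w s > 0"
    and dw: "\<And>s. (w has_real_derivative g s * w s) (at s)"
    and dg: "\<And>s. (g has_real_derivative (A0 - c1*g s - q*(g s)^2 - \<kappa>*g s*w s)) (at s)"
    and g1: "g s1 > 0"
begin

definition G where "G s = A0 - c1*g s - q*(g s)^2 - \<kappa>*g s*w s"

lemma dg': "(g has_real_derivative G s) (at s)" using dg unfolding G_def .

lemma A0pos: "A0 > 0" using A0def cpos by simp

lemma G_fact: "G s = -(g s - 2)*(q * g s + c1 + 2*q) - \<kappa> * g s * w s"
  using A0def unfolding G_def by (simp add: algebra_simps power2_eq_square)

lemma gpos: "s \<ge> s1 \<Longrightarrow> g s > 0"
proof -
  assume s: "s \<ge> s1"
  have "(\<lambda>s. - g s) s < 0"
  proof (rule barrier[of s1 "\<lambda>s. - g s" "\<lambda>s. - G s" s])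
    show "\<And>t. s1 \<le> t \<Longrightarrow> ((\<lambda>s. - g s) has_real_derivative - G t) (at t)"
      using dg' by (intro DERIV_minus)
  qed (use g1 s A0pos in \<open>auto simp: G_def\<close>)
  thus ?thesis by simp
qed

lemma gbd: "\<exists>M. \<forall>s\<ge>s1. g s < M"
proof -
  define M where "M = max 2 (g s1) + 1"
  have "g s - M < 0" if "s \<ge> s1" for s
  proof (rule barrier[of s1 "\<lambda>s. g s - M" G s])
    show "g s1 - M < 0" unfolding M_def by simp
    fix t assume t: "t \<ge> s1" "g t - M = 0"
    hence gt: "g t = M" by simp
    have "M - 2 > 0" unfolding M_def by simp
    moreover have "q * M + c1 + 2*q > 0" using qpos cpos unfolding M_def
      by (smt (verit) mult_pos_pos)
    ultimately have "(g t - 2)*(q * g t + c1 + 2*q) > 0" using gt by simp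
    moreover have "\<kappa> * g t * w t > 0" using kpos wpos[of t] gt unfolding M_def by simp
    moreover have "(2 - g t) * (q * g t + c1 + 2 * q) = - ((g t - 2) * (q * g t + c1 + 2 * q))"
      by (simp add: algebra_simps)
    ultimately show "G t < 0" using G_fact[of t] by simp
  qed (use dg' that in \<open>auto intro!: derivative_eq_intros\<close>)
  thus ?thesis by auto
qed

lemma dlnw: "((\<lambda>s. ln (w s)) has_real_derivative g s) (at s)"
  by (rule DERIV_cong[OF DERIV_chain2[OF DERIV_ln_divide[OF wpos] dw]]) (use wpos[of s] in simp)

lemma w_mono: "s1 \<le> s \<Longrightarrow> s \<le> t \<Longrightarrow> w s \<le> w t"
  using deriv_ge[of s t w "\<lambda>x. g x * w x" 0] dw gpos wpos
  by (smt (verit) mult_pos_pos)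

lemma w_unbounded: "\<exists>s\<ge>s1. w s > W"
proof (rule ccontr)
  assume "\<not> ?thesis"
  hence wle: "\<And>s. s \<ge> s1 \<Longrightarrow> w s \<le> W" by auto
  have Wpos: "W > 0" using wle[of s1] wpos[of s1] by simp
  define L where "L = \<bar>c1\<bar> + q + \<kappa> * W"
  have Lpos: "L > 0" unfolding L_def using qpos kpos Wpos by (smt (verit) mult_pos_pos)
  define \<delta> where "\<delta> = min 1 (A0 / (2 * L))"
  have dpos: "\<delta> > 0" unfolding \<delta>_def using A0pos Lpos by simp
  have Gbig: "G t \<ge> A0 / 2" if t: "t \<ge> s1" "0 < g t" "g t \<le> \<delta>" for t
  proof -
    have g1': "g t \<le> 1" "g t \<le> A0 / (2 * L)" using t unfolding \<delta>_def by auto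
    have "c1 * g t \<le> \<bar>c1\<bar> * g t" using t by (simp add: mult_right_mono)
    moreover have "q * (g t)^2 \<le> q * g t" using g1' t qpos
      by (simp add: power2_eq_square mult_left_mono mult_le_cancel_left1)
    moreover have "\<kappa> * g t * w t \<le> \<kappa> * W * g t" using wle[OF t(1)] t kpos
      by (simp add: mult_left_mono mult_right_mono mult.commute mult.left_commute)
    moreover have "L * g t \<le> A0 / 2" using g1'(2) Lpos
      by (simp add: field_simps)
    ultimately show ?thesis unfolding G_def L_def by (simp add: algebra_simps)
  qed
  have "\<exists>a\<ge>s1. g a > \<delta>"
  proof (rule ccontr)
    assume "\<not> ?thesis"
    hence gle: "\<And>t. t \<ge> s1 \<Longrightarrow> g t \<le> \<delta>" by force
    define t where "t = s1 + 2 * \<delta> / A0 + 1"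
    have "t \<ge> s1" unfolding t_def using dpos A0pos by simp
    have "g t - g s1 \<ge> A0 / 2 * (t - s1)"
      by (rule deriv_ge[OF \<open>t \<ge> s1\<close> dg']) (use Gbig gle gpos in auto)
    moreover have "A0 / 2 * (t - s1) > \<delta>" unfolding t_def using A0pos dpos
      by (simp add: field_simps)
    ultimately show False using gle[OF \<open>t \<ge> s1\<close>] gpos[of s1] by simp
  qed
  then obtain a where a: "a \<ge> s1" "g a > \<delta>" by auto
  have gd: "g t > \<delta>" if "t \<ge> a" for t
  proof -
    have "(\<lambda>t. \<delta> - g t) t < 0"
    proof (rule barrier[of a "\<lambda>t. \<delta> - g t" "\<lambda>t. - G t" t])
      fix t assume "t \<ge> a" "\<delta> - g t = 0"
      thus "- G t < 0" using Gbig[of t] a dpos A0pos by simp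
    qed (use a that dg' in \<open>auto intro!: derivative_eq_intros\<close>)
    thus ?thesis by simp
  qed
  define t where "t = a + (ln W - ln (w a)) / \<delta> + 1"
  have "ln (w a) \<le> ln W" using wle[of a] a wpos[of a] Wpos by simp
  hence ta: "t \<ge> a" unfolding t_def using dpos by simp
  have "ln (w t) - ln (w a) \<ge> \<delta> * (t - a)"
    by (rule deriv_ge[OF ta dlnw]) (use gd in \<open>auto intro: less_imp_le\<close>)
  moreover have "\<delta> * (t - a) > ln W - ln (w a)" unfolding t_def using dpos
    by (simp add: field_simps)
  ultimately have "ln (w t) > ln W" by simp
  hence "w t > W" using wpos[of t] Wpos by simp
  thus False using wle[of t] ta a by simp
qed

lemma w_top: "filterlim w at_top at_top"
  unfolding filterlim_at_top eventually_at_top_linorder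
proof
  fix Z
  obtain s where "s \<ge> s1" "w s > Z" using w_unbounded by auto
  thus "\<exists>N. \<forall>n\<ge>N. Z \<le> w n" using w_mono by (meson less_imp_le order_trans)
qed

lemma g_zero: "(g \<longlongrightarrow> 0) at_top"
  unfolding tendsto_iff
proof (intro allI impI)
  fix \<epsilon> :: real assume ep: "\<epsilon> > 0"
  have "eventually (\<lambda>s. (2 * A0 / \<epsilon> + \<bar>c1\<bar>) / \<kappa> \<le> w s) at_top"
    using w_top unfolding filterlim_at_top by auto
  then obtain s2 where s2: "\<And>t. t \<ge> s2 \<Longrightarrow> (2 * A0 / \<epsilon> + \<bar>c1\<bar>) / \<kappa> \<le> w t"
    unfolding eventually_at_top_linorder by auto
  define s3 where "s3 = max s1 s2"
  have Gneg: "G t \<le> - A0" if "t \<ge> s3" "g t \<ge> \<epsilon>" for t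
  proof -
    have gt: "g t > 0" using gpos[of t] that unfolding s3_def by simp
    have kw: "\<kappa> * w t \<ge> 2 * A0 / \<epsilon> + \<bar>c1\<bar>" using s2[of t] that kpos unfolding s3_def
      by (simp add: field_simps)
    have "\<kappa> * g t * w t \<ge> g t * (2 * A0 / \<epsilon> + \<bar>c1\<bar>)"
      using mult_left_mono[OF kw, of "g t"] gt by (simp add: algebra_simps)
    moreover have "g t * (2 * A0 / \<epsilon>) \<ge> 2 * A0"
      using that ep A0pos by (simp add: field_simps)
    moreover have "- c1 * g t \<le> \<bar>c1\<bar> * g t" using gt mult_right_mono[of "-c1" "\<bar>c1\<bar>" "g t"] by simp
    moreover have "q * (g t)^2 \<ge> 0" using qpos by simp
    ultimately show ?thesis unfolding G_def by (simp add: algebra_simps)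
  qed
  have "\<exists>a\<ge>s3. g a < \<epsilon>"
  proof (rule ccontr)
    assume "\<not> ?thesis"
    hence gge: "\<And>t. t \<ge> s3 \<Longrightarrow> g t \<ge> \<epsilon>" by force
    define t where "t = s3 + g s3 / A0 + 1"
    have "g s3 / A0 > 0" using gpos[of s3] A0pos unfolding s3_def by simp
    hence ts: "t \<ge> s3" unfolding t_def by simp
    have "g t - g s3 \<le> (- A0) * (t - s3)"
      by (rule deriv_le[OF ts dg']) (use Gneg gge in auto)
    moreover have "A0 * (t - s3) > g s3" unfolding t_def using A0pos by (simp add: field_simps)
    ultimately have "g t < 0" by simp
    thus False using gpos[of t] ts unfolding s3_def by simp
  qed
  then obtain a where a: "a \<ge> s3" "g a < \<epsilon>" by auto
  have "g t - \<epsilon> < 0" if "t \<ge> a" for t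
  proof (rule barrier[of a "\<lambda>t. g t - \<epsilon>" G t])
    fix t assume "t \<ge> a" "g t - \<epsilon> = 0"
    thus "G t < 0" using Gneg[of t] a A0pos by simp
  qed (use a that dg' in \<open>auto intro!: derivative_eq_intros\<close>)
  hence "\<forall>t\<ge>a. dist (g t) 0 < \<epsilon>"
  proof (intro allI impI)
    fix t assume h: "\<And>t. a \<le> t \<Longrightarrow> g t - \<epsilon> < 0" and t: "t \<ge> a"
    have "g t > 0" using gpos[of t] a t unfolding s3_def by simp
    thus "dist (g t) 0 < \<epsilon>" using h[OF t] by (simp add: dist_real_def)
  qed
  thus "eventually (\<lambda>t. dist (g t) 0 < \<epsilon>) at_top" unfolding eventually_at_top_linorder by auto
qed


definition aa where "aa = A0 / \<kappa>"
definition B where "B = c1 / \<kappa>"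
definition E where "E s = w s - aa * s + B * ln (w s) + g s / \<kappa>"

lemma aapos: "aa > 0" unfolding aa_def using A0pos kpos by simp

lemma dE: "(E has_real_derivative (- q * (g s)^2 / \<kappa>)) (at s)"
proof -
  have "(E has_real_derivative (g s * w s - aa + B * g s + G s / \<kappa>)) (at s)"
  proof -
    have d2: "((\<lambda>s. aa * s) has_real_derivative aa) (at s)"
      using DERIV_cmult[OF DERIV_ident, of aa] by simp
    show ?thesis unfolding E_def[abs_def]
      by (rule DERIV_add[OF DERIV_add[OF DERIV_diff[OF dw d2] DERIV_cmult[OF dlnw]] DERIV_cdivide[OF dg']])
  qed
  moreover have "g s * w s - aa + B * g s + G s / \<kappa> = - q * (g s)^2 / \<kappa>"
    unfolding aa_def B_def G_def using kpos by (simp add: field_simps)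
  ultimately show ?thesis by simp
qed

lemma over_s:
  fixes f f' :: "real \<Rightarrow> real"
  assumes "\<And>s. (f has_real_derivative f' s) (at s)" "(f' \<longlongrightarrow> 0) at_top"
  shows "((\<lambda>s. f s / s) \<longlongrightarrow> 0) at_top"
  by (rule lhospital_at_top_at_top[of "\<lambda>x. x" "\<lambda>_. 1" f f'])
     (use assms in \<open>auto intro!: filterlim_ident derivative_eq_intros\<close>)

lemma w_over_s: "((\<lambda>s. w s / s) \<longlongrightarrow> aa) at_top"
proof -
  have t1: "((\<lambda>s. E s / s) \<longlongrightarrow> 0) at_top"
  proof (rule over_s[OF dE])
    show "((\<lambda>s. - q * (g s)^2 / \<kappa>) \<longlongrightarrow> 0) at_top"
      using tendsto_mult[OF tendsto_const[of "-q/\<kappa>"] tendsto_power[OF g_zero, of 2]] by simp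
  qed
  have t2: "((\<lambda>s. ln (w s) / s) \<longlongrightarrow> 0) at_top" by (rule over_s[OF dlnw g_zero])
  have t3: "((\<lambda>s. (g s / \<kappa>) / s) \<longlongrightarrow> 0) at_top"
    by (rule tendsto_divide_0[OF tendsto_divide[OF g_zero tendsto_const]])
       (use kpos filterlim_at_top_imp_at_infinity[OF filterlim_ident] in auto)
  have "((\<lambda>s. E s / s + aa - B * (ln (w s) / s) - (g s / \<kappa>) / s) \<longlongrightarrow> 0 + aa - B * 0 - 0) at_top"
    by (intro tendsto_intros t1 t2 t3)
  moreover have "eventually (\<lambda>s. E s / s + aa - B * (ln (w s) / s) - (g s / \<kappa>) / s = w s / s) at_top"
    using eventually_gt_at_top[of 0]
    by eventually_elim (simp add: E_def field_simps)
  ultimately show ?thesis using tendsto_cong by force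
qed


lemma g_O: "\<exists>c s2. c > 0 \<and> s2 \<ge> 1 \<and> s2 \<ge> s1 \<and> (\<forall>t\<ge>s2. g t < c / t)"
proof -
  have "eventually (\<lambda>s. w s / s > aa / 2) at_top"
    using order_tendstoD(1)[OF w_over_s, of "aa/2"] aapos by simp
  then obtain s0 where s0: "\<And>t. t \<ge> s0 \<Longrightarrow> w t / t > aa / 2"
    unfolding eventually_at_top_linorder by auto
  define s2 where "s2 = max (max s1 1) (max s0 (max (8/A0+1) (4*\<bar>c1\<bar>/A0)))"
  have s2: "s2 \<ge> s1" "s2 \<ge> 1" "s2 \<ge> s0" "s2 \<ge> 8/A0+1" "s2 \<ge> 4*\<bar>c1\<bar>/A0"
    unfolding s2_def by auto
  have Gb: "G t \<le> A0 - g t * (A0 * t / 4)" if t: "t \<ge> s2" for t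
  proof -
    have tpos: "t > 0" using t s2 by simp
    have gt: "g t > 0" using gpos[of t] t s2 by simp
    have "w t > aa / 2 * t" using s0[of t] t s2 tpos by (simp add: field_simps)
    hence "\<kappa> * w t > A0 * t / 2" using kpos unfolding aa_def by (simp add: field_simps)
    moreover have "A0 * s2 \<le> A0 * t" using mult_left_mono[OF t, of A0] A0pos by simp
    moreover have "4*\<bar>c1\<bar> \<le> A0 * s2" using s2(5) A0pos by (simp add: field_simps)
    ultimately have kw: "\<kappa> * w t \<ge> \<bar>c1\<bar> + A0 * t / 4" by linarith
    have "\<kappa> * g t * w t \<ge> g t * (\<bar>c1\<bar> + A0 * t / 4)"
      using mult_left_mono[OF kw, of "g t"] gt by (simp add: algebra_simps)
    moreover have "- c1 * g t \<le> \<bar>c1\<bar> * g t" using gt mult_right_mono[of "-c1" "\<bar>c1\<bar>" "g t"] by simp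
    moreover have "q * (g t)^2 \<ge> 0" using qpos by simp
    ultimately show ?thesis unfolding G_def by (simp add: algebra_simps)
  qed
  define c where "c = max 9 (s2 * g s2 + 1)"
  have c9: "c \<ge> 9" unfolding c_def by simp
  have "g t - c * inverse t < 0" if tt: "t \<ge> s2" for t
  proof (rule barrier[of s2 "\<lambda>t. g t - c * inverse t" "\<lambda>t. G t + c * (inverse t)^2" t])
    show "g s2 - c * inverse s2 < 0"
    proof -
      have "s2 * g s2 < c" unfolding c_def by simp
      thus ?thesis using s2(2) by (simp add: field_simps)
    qed
    show "((\<lambda>t. g t - c * inverse t) has_real_derivative G t + c * (inverse t)^2) (at t)"
      if "t \<ge> s2" for t
      using that s2(2) by (auto intro!: derivative_eq_intros dg' simp: power2_eq_square)
    fix t assume t: "t \<ge> s2" "g t - c * inverse t = 0"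
    have tpos: "t > 0" using t s2 by simp
    have gt: "g t * t = c" using t(2) tpos by (simp add: field_simps)
    have "G t \<le> A0 - c * A0 / 4" using Gb[OF t(1)] gt by (simp add: algebra_simps)
    moreover have "(inverse t)^2 \<le> A0 / 8"
    proof -
      have "t \<ge> 8 / A0" using t s2 by simp
      hence "t * t \<ge> 8 / A0" using tpos \<open>t \<ge> 8/A0\<close> s2 t(1)
        by (smt (verit) mult_right_mono mult_cancel_right1)
      thus ?thesis using A0pos tpos by (simp add: field_simps power2_eq_square)
    qed
    hence "c * (inverse t)^2 \<le> c * (A0 / 8)" using c9 by (intro mult_left_mono) auto
    ultimately have "G t + c * (inverse t)^2 \<le> A0 - c * A0 / 8" by simp
    also have "\<dots> < 0"
    proof -
      have "9 * A0 \<le> c * A0" using mult_right_mono[OF c9, of A0] A0pos by simp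
      thus ?thesis using A0pos by simp
    qed
    finally show "G t + c * (inverse t)^2 < 0" .
  qed (use tt in simp)
  hence "\<forall>t\<ge>s2. g t < c / t" by (simp add: field_simps)
  thus ?thesis using s2 c9 by (intro exI[of _ c] exI[of _ s2]) auto
qed


lemma E_dec: "s1 \<le> s \<Longrightarrow> s \<le> t \<Longrightarrow> E t \<le> E s"
proof -
  assume "s1 \<le> s" "s \<le> t"
  have "E t - E s \<le> 0 * (t - s)"
  proof (rule deriv_le[OF \<open>s \<le> t\<close> dE])
    fix x show "- q * (g x)^2 / \<kappa> \<le> 0" using qpos kpos by (simp add: divide_nonpos_pos)
  qed
  thus ?thesis by simp
qed



lemma E_lim: "\<exists>c s2 Einf. c > 0 \<and> s2 \<ge> 1 \<and> s2 \<ge> s1 \<and> (\<forall>t\<ge>s2. g t < c / t) \<and> (E \<longlongrightarrow> Einf) at_top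
   \<and> (\<forall>t\<ge>s2. E t - q * c^2 / \<kappa> / t \<le> Einf \<and> Einf \<le> E t)"
proof -
  obtain c s2 where cs: "c > 0" "s2 \<ge> 1" "s2 \<ge> s1" "\<And>t. t \<ge> s2 \<Longrightarrow> g t < c / t" using g_O by auto
  define D where "D = q * c^2 / \<kappa>"
  have Dpos: "D \<ge> 0" unfolding D_def using qpos kpos by simp
  define F where "F t = E t - D * inverse t" for t
  have F_inc: "F s \<le> F t" if "s2 \<le> s" "s \<le> t" for s t
  proof -
    have "0 * (t - s) \<le> F t - F s"
    proof (rule deriv_ge[OF that(2), of F "\<lambda>t. - q * (g t)^2 / \<kappa> + D * (inverse t)^2"])
      fix x assume x: "s \<le> x" "x \<le> t"
      hence xpos: "x > 0" using that cs by simp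
      show "(F has_real_derivative - q * (g x)^2 / \<kappa> + D * (inverse x)^2) (at x)"
        unfolding F_def[abs_def] using xpos
        by (auto intro!: derivative_eq_intros dE simp: power2_eq_square)
      have g0: "0 < g x" "g x < c / x" using gpos[of x] cs(4)[of x] x that cs by auto
      hence "(g x)^2 \<le> (c / x)^2" by (intro power_mono) auto
      hence "q * (g x)^2 / \<kappa> \<le> q * (c / x)^2 / \<kappa>" using qpos kpos
        by (intro divide_right_mono mult_left_mono) auto
      also have "\<dots> = D * (inverse x)^2" unfolding D_def by (simp add: field_simps)
      finally show "0 \<le> - q * (g x)^2 / \<kappa> + D * (inverse x)^2" by simp
    qed
    thus ?thesis by simp
  qed
  define Einf where "Einf = Inf (E ` {s2..})"
  have bdd: "bdd_below (E ` {s2..})"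
  proof (rule bdd_belowI[of _ "F s2"])
    fix y assume "y \<in> E ` {s2..}"
    then obtain t where t: "t \<ge> s2" "y = E t" by auto
    have "F s2 \<le> F t" using F_inc t by simp
    moreover have "F t \<le> E t" unfolding F_def using Dpos t cs by simp
    ultimately show "F s2 \<le> y" using t by simp
  qed
  have up: "Einf \<le> E t" if "t \<ge> s2" for t
    unfolding Einf_def using that bdd by (intro cInf_lower) auto
  have lo: "F s \<le> Einf" if s: "s \<ge> s2" for s
    unfolding Einf_def
  proof (rule cInf_greatest)
    show "E ` {s2..} \<noteq> {}" by auto
    fix y assume "y \<in> E ` {s2..}"
    then obtain t where t: "t \<ge> s2" "y = E t" by auto
    show "F s \<le> y"
    proof (cases "t \<ge> s")
      case True
      hence "F s \<le> F t" using F_inc s by simp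
      moreover have "F t \<le> E t" unfolding F_def using Dpos t cs by simp
      ultimately show ?thesis using t by simp
    next
      case False
      have "F s \<le> E s" unfolding F_def using Dpos s cs by simp
      moreover have "E s \<le> E t" using E_dec[of t s] False t cs by simp
      ultimately show ?thesis using t by simp
    qed
  qed
  have lim: "(E \<longlongrightarrow> Einf) at_top"
  proof (rule tendsto_sandwich[of "\<lambda>_. Einf" _ _ "\<lambda>t. Einf + D * inverse t"])
    show "eventually (\<lambda>t. Einf \<le> E t) at_top"
      unfolding eventually_at_top_linorder using up by auto
    show "eventually (\<lambda>t. E t \<le> Einf + D * inverse t) at_top"
      unfolding eventually_at_top_linorder
    proof (intro exI[of _ s2] allI impI)
      fix t assume "t \<ge> s2"
      thus "E t \<le> Einf + D * inverse t" using lo[of t] unfolding F_def by linarith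
    qed
    show "((\<lambda>t. Einf + D * inverse t) \<longlongrightarrow> Einf) at_top"
      using tendsto_add[OF tendsto_const tendsto_mult_right_zero[OF tendsto_inverse_0_at_top[OF filterlim_ident]], of Einf D]
      by simp
  qed simp
  have lo': "E t - q * c^2 / \<kappa> / t \<le> Einf" if "t \<ge> s2" for t
  proof -
    have "q * c^2 / \<kappa> / t = D * inverse t" unfolding D_def by (simp add: divide_inverse)
    thus ?thesis using lo[OF that] unfolding F_def by simp
  qed
  show ?thesis
    using cs lim up lo' by (intro exI[of _ c] exI[of _ s2] exI[of _ Einf]) auto
qed


theorem asym:
  "\<exists>K. ((\<lambda>s. w s - aa * s + B*ln s) \<longlongrightarrow> K) at_top \<and>
     (\<lambda>s. w s - aa * s + B*ln s - K - (B^2/aa) * (1 + ln s) / s) \<in> o[at_top](\<lambda>s. (1 + ln s) / s)"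
proof -
  obtain c s2 Einf where cs: "c > 0" "s2 \<ge> 1" "s2 \<ge> s1" "\<And>t. t \<ge> s2 \<Longrightarrow> g t < c / t"
     "(E \<longlongrightarrow> Einf) at_top" "\<And>t. t \<ge> s2 \<Longrightarrow> E t - q * c^2 / \<kappa> / t \<le> Einf \<and> Einf \<le> E t"
    using E_lim by blast
  define h1 where "h1 s = w s - aa * s + B*ln s" for s
  define K where "K = Einf - B * ln aa"
  have eq1: "h1 s = E s - B * ln (w s / s) - g s / \<kappa>" if "s > 0" for s
    unfolding h1_def E_def using that wpos[of s] by (simp add: ln_div algebra_simps)
  have lim: "(h1 \<longlongrightarrow> K) at_top"
  proof -
    have "((\<lambda>s. E s - B * ln (w s / s) - g s / \<kappa>) \<longlongrightarrow> Einf - B * ln aa - 0 / \<kappa>) at_top"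
      by (intro tendsto_intros cs(5) g_zero w_over_s) (use aapos kpos in auto)
    moreover have "eventually (\<lambda>s. E s - B * ln (w s / s) - g s / \<kappa> = h1 s) at_top"
      using eventually_gt_at_top[of 0] by eventually_elim (simp add: eq1)
    ultimately show ?thesis unfolding K_def using tendsto_cong by force
  qed
  obtain s3 where s3: "\<And>s. s \<ge> s3 \<Longrightarrow> \<bar>h1 s - K\<bar> < 1"
    using lim[unfolded tendsto_iff, rule_format, of 1] unfolding eventually_at_top_linorder dist_real_def
    by auto
  define x where "x s = w s / (aa * s) - 1" for s
  have xlim: "(x \<longlongrightarrow> 0) at_top"
  proof -
    have "((\<lambda>s. (w s / s) / aa - 1) \<longlongrightarrow> aa / aa - 1) at_top"
      by (intro tendsto_intros w_over_s) (use aapos in simp)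
    thus ?thesis unfolding x_def using aapos by (simp add: mult.commute)
  qed
  obtain s4 where s4: "\<And>s. s \<ge> s4 \<Longrightarrow> \<bar>x s\<bar> < 1/2"
    using xlim[unfolded tendsto_iff, rule_format, of "1/2"] unfolding eventually_at_top_linorder dist_real_def
    by auto
  define S where "S = max s2 (max s3 s4)"
  have S: "S \<ge> 1" "S \<ge> s2" "S \<ge> s3" "S \<ge> s4" unfolding S_def using cs by auto
  define H where "H = \<bar>K\<bar> + 1"
  define C where "C = B^2 / aa"
  define \<phi> where "\<phi> s = 1 / s + (ln s)^2 / s^2" for s :: real
  have phipos: "\<phi> s \<ge> 1 / s" "1 / s \<ge> 0" "(ln s)^2 / s^2 \<ge> 0" if "s \<ge> 1" for s
    unfolding \<phi>_def using that by auto
  have ident: "h1 s - K - C * (1 + ln s) / s =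
      (E s - Einf) - C / s - B * h1 s / (aa * s) - B * (ln (1 + x s) - x s) - g s / \<kappa>"
    if s: "s \<ge> S" for s
  proof -
    have spos: "s > 0" using s S by simp
    have x1: "1 + x s > 0" using s4[of s] s S by simp
    have wsx: "w s / s = aa * (1 + x s)" unfolding x_def using aapos spos by (simp add: field_simps)
    have l: "ln (w s / s) = ln aa + ln (1 + x s)" unfolding wsx using aapos x1 by (simp add: ln_mult)
    have hA: "h1 s = E s - B * ln aa - B * ln (1 + x s) - g s / \<kappa>" using eq1[OF spos] l by (simp add: algebra_simps)
    have xB: "x s = (h1 s - B * ln s) / (aa * s)" unfolding x_def h1_def using aapos spos
      by (simp add: field_simps)
    show ?thesis unfolding K_def C_def
      by (rule ident_alg[OF _ _ hA xB]) (use aapos spos in auto)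
  qed
  define D where "D = q * c^2 / \<kappa>"
  have Dpos: "D \<ge> 0" unfolding D_def using qpos kpos by simp
  have phi0: "\<phi> s \<ge> 0" if "s \<ge> S" for s
  proof -
    have "s \<ge> 1" using that S by simp
    from phipos[OF this] show ?thesis by linarith
  qed
  have T1: "(\<lambda>s. E s - Einf) \<in> O[at_top](\<phi>)"
  proof (rule bigo_ev[OF Dpos _ phi0])
    fix s assume s: "s \<ge> S"
    have "E s - D / s \<le> Einf" "Einf \<le> E s" using cs(6)[of s] s S unfolding D_def by auto
    hence "\<bar>E s - Einf\<bar> \<le> D * (1 / s)" by simp
    also have "\<dots> \<le> D * \<phi> s" using phipos[of s] s S Dpos by (intro mult_left_mono) auto
    finally show "\<bar>E s - Einf\<bar> \<le> D * \<phi> s" .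
  qed
  have T2: "(\<lambda>s. C / s) \<in> O[at_top](\<phi>)"
  proof (rule bigo_ev[of "\<bar>C\<bar>" S _ \<phi>, OF _ _ phi0])
    fix s assume s: "s \<ge> S"
    have "\<bar>C / s\<bar> = \<bar>C\<bar> * (1 / s)" using s S by simp
    also have "\<dots> \<le> \<bar>C\<bar> * \<phi> s" using phipos[of s] s S by (intro mult_left_mono) auto
    finally show "\<bar>C / s\<bar> \<le> \<bar>C\<bar> * \<phi> s" .
  qed auto
  have hb: "\<bar>h1 s\<bar> \<le> H" if "s \<ge> S" for s using s3[of s] that S unfolding H_def by linarith
  have T3: "(\<lambda>s. B * h1 s / (aa * s)) \<in> O[at_top](\<phi>)"
  proof (rule bigo_ev[of "\<bar>B\<bar> * H / aa" S _ \<phi>, OF _ _ phi0])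
    fix s assume s: "s \<ge> S"
    have spos: "s > 0" using s S by simp
    have "\<bar>B * h1 s / (aa * s)\<bar> = \<bar>B\<bar> * \<bar>h1 s\<bar> / aa * (1 / s)" using aapos spos
      by (simp add: abs_mult field_simps)
    also have "\<dots> \<le> \<bar>B\<bar> * H / aa * (1 / s)" using hb[OF s] aapos spos
      by (intro mult_right_mono divide_right_mono mult_left_mono) auto
    also have "\<dots> \<le> \<bar>B\<bar> * H / aa * \<phi> s" using phipos[of s] s S aapos hb[OF s]
      by (intro mult_left_mono) auto
    finally show "\<bar>B * h1 s / (aa * s)\<bar> \<le> \<bar>B\<bar> * H / aa * \<phi> s" .
  qed (use aapos H_def in auto)
  have T5: "(\<lambda>s. g s / \<kappa>) \<in> O[at_top](\<phi>)"
  proof (rule bigo_ev[of "c / \<kappa>" S _ \<phi>, OF _ _ phi0])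
    fix s assume s: "s \<ge> S"
    have spos: "s > 0" using s S by simp
    have g: "0 < g s" "g s < c / s" using gpos[of s] cs(4)[of s] cs(3) s S by auto
    hence "\<bar>g s / \<kappa>\<bar> \<le> c / \<kappa> * (1 / s)" using kpos spos by (simp add: field_simps)
    also have "\<dots> \<le> c / \<kappa> * \<phi> s" using phipos[of s] s S kpos cs(1)
      by (intro mult_left_mono) auto
    finally show "\<bar>g s / \<kappa>\<bar> \<le> c / \<kappa> * \<phi> s" .
  qed (use kpos cs(1) in auto)
  have T4: "(\<lambda>s. B * (ln (1 + x s) - x s)) \<in> O[at_top](\<phi>)"
  proof (rule bigo_ev[of "4 * \<bar>B\<bar> * H^2 / aa^2 + 4 * \<bar>B\<bar> * B^2 / aa^2" S _ \<phi>, OF _ _ phi0])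
    fix s assume s: "s \<ge> S"
    have spos: "s > 0" using s S by simp
    have lns: "ln s \<ge> 0" using s S by simp
    have xB: "x s = (h1 s - B * ln s) / (aa * s)" unfolding x_def h1_def using aapos spos
      by (simp add: field_simps)
    define Y where "Y = (H + \<bar>B\<bar> * ln s) / (aa * s)"
    have "\<bar>h1 s - B * ln s\<bar> \<le> H + \<bar>B\<bar> * ln s"
      using hb[OF s] lns abs_triangle_ineq4[of "h1 s" "B * ln s"] by (simp add: abs_mult)
    hence xY: "\<bar>x s\<bar> \<le> Y" unfolding xB Y_def using aapos spos
      by (simp add: abs_mult divide_right_mono)
    have "(x s)^2 \<le> Y^2" using xY power_mono[of "\<bar>x s\<bar>" Y 2] by simp
    also have "Y^2 = (H + \<bar>B\<bar> * ln s)^2 / (aa^2 * s^2)" unfolding Y_def by (simp add: power_divide power_mult_distrib)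
    also have "\<dots> \<le> (2 * H^2 + 2 * B^2 * (ln s)^2) / (aa^2 * s^2)"
    proof (rule divide_right_mono)
      have "(H + \<bar>B\<bar> * ln s)^2 \<le> 2 * H^2 + 2 * (\<bar>B\<bar> * ln s)^2"
        using sum_squares_ge_zero[of H "\<bar>B\<bar> * ln s"]
        by (smt (verit, best) power2_sum zero_le_power2 power2_diff)
      thus "(H + \<bar>B\<bar> * ln s)^2 \<le> 2 * H^2 + 2 * B^2 * (ln s)^2" by (simp add: power_mult_distrib)
    qed simp
    also have "\<dots> = 2 * H^2 / aa^2 * (1 / s^2) + 2 * B^2 / aa^2 * ((ln s)^2 / s^2)"
      using aapos spos by (simp add: field_simps)
    also have "\<dots> \<le> 2 * H^2 / aa^2 * (1 / s) + 2 * B^2 / aa^2 * ((ln s)^2 / s^2)"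
    proof -
      have "1 / s^2 \<le> 1 / s" using s S by (simp add: field_simps power2_eq_square)
      thus ?thesis by (intro add_right_mono mult_left_mono) auto
    qed
    finally have x2: "(x s)^2 \<le> 2 * H^2 / aa^2 * (1 / s) + 2 * B^2 / aa^2 * ((ln s)^2 / s^2)" .
    have "\<bar>B * (ln (1 + x s) - x s)\<bar> \<le> \<bar>B\<bar> * (2 * (x s)^2)"
      unfolding abs_mult using abs_ln_one_plus_x_minus_x_bound[of "x s"] s4[of s] s S
      by (intro mult_left_mono) auto
    also have "\<dots> \<le> \<bar>B\<bar> * (2 * (2 * H^2 / aa^2 * (1 / s) + 2 * B^2 / aa^2 * ((ln s)^2 / s^2)))"
      using x2 by (intro mult_left_mono) auto
    also have "\<dots> = (4 * \<bar>B\<bar> * H^2 / aa^2) * (1 / s) + (4 * \<bar>B\<bar> * B^2 / aa^2) * ((ln s)^2 / s^2)"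
      by (simp add: algebra_simps)
    also have "\<dots> \<le> (4 * \<bar>B\<bar> * H^2 / aa^2 + 4 * \<bar>B\<bar> * B^2 / aa^2) * \<phi> s"
    proof -
      have ge: "\<And>a b u v :: real. a \<ge> 0 \<Longrightarrow> b \<ge> 0 \<Longrightarrow> u \<ge> 0 \<Longrightarrow> v \<ge> 0 \<Longrightarrow> a * u + b * v \<le> (a + b) * (u + v)"
      proof -
        fix a b u v :: real assume "a \<ge> 0" "b \<ge> 0" "u \<ge> 0" "v \<ge> 0"
        hence "a * v \<ge> 0" "b * u \<ge> 0" by auto
        moreover have "(a + b) * (u + v) = a * u + b * v + (a * v + b * u)" by (simp add: algebra_simps)
        ultimately show "a * u + b * v \<le> (a + b) * (u + v)" by linarith
      qed
      show ?thesis unfolding \<phi>_def using spos by (intro ge) auto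
    qed
    finally show "\<bar>B * (ln (1 + x s) - x s)\<bar> \<le> (4 * \<bar>B\<bar> * H^2 / aa^2 + 4 * \<bar>B\<bar> * B^2 / aa^2) * \<phi> s" .
  qed simp
  have sumO: "(\<lambda>s. (E s - Einf) - C / s - B * h1 s / (aa * s) - B * (ln (1 + x s) - x s) - g s / \<kappa>) \<in> O[at_top](\<phi>)"
    by (intro sum_in_bigo T1 T2 T3 T4 T5)
  have phio: "\<phi> \<in> o[at_top](\<lambda>s. (1 + ln s) / s)" unfolding \<phi>_def[abs_def] by (rule phi_smallo)
  have sm: "(\<lambda>s. (E s - Einf) - C / s - B * h1 s / (aa * s) - B * (ln (1 + x s) - x s) - g s / \<kappa>)
           \<in> o[at_top](\<lambda>s. (1 + ln s) / s)"
    by (rule landau_o.big_small_trans[OF sumO phio])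
  have ev: "eventually (\<lambda>s. (E s - Einf) - C / s - B * h1 s / (aa * s) - B * (ln (1 + x s) - x s) - g s / \<kappa>
           = h1 s - K - C * (1 + ln s) / s) at_top"
    unfolding eventually_at_top_linorder using ident by (intro exI[of _ S]) auto
  have "(\<lambda>s. h1 s - K - C * (1 + ln s) / s) \<in> o[at_top](\<lambda>s. (1 + ln s) / s)"
    using landau_o.small.in_cong[OF ev] sm by (rule iffD1)
  thus ?thesis using lim unfolding h1_def[abs_def] C_def by blast
qed

end


lemma ray_deriv:
  fixes F :: "real^'n \<Rightarrow> real" and e :: "real^'n"
  assumes "(F has_derivative (\<lambda>h. DF \<bullet> h)) (at (t *\<^sub>R e))"
  shows "((\<lambda>t. F (t *\<^sub>R e)) has_real_derivative (DF \<bullet> e)) (at t)"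
proof -
  have l: "((\<lambda>t. t *\<^sub>R e) has_derivative (\<lambda>h. h *\<^sub>R e)) (at t)"
    by (auto intro!: derivative_eq_intros)
  have "((\<lambda>t. F (t *\<^sub>R e)) has_derivative (\<lambda>h. DF \<bullet> (h *\<^sub>R e))) (at t)"
    using has_derivative_compose[OF l assms] .
  moreover have "(\<lambda>h. DF \<bullet> (h *\<^sub>R e)) = (*) (DF \<bullet> e)" by (auto simp: mult.commute)
  ultimately show ?thesis unfolding has_field_derivative_def by simp
qed

lemma ray_deriv2:
  fixes G :: "real^'n \<Rightarrow> real^'n" and e :: "real^'n"
  assumes "(G has_derivative (\<lambda>h. M *v h)) (at (t *\<^sub>R e))"
  shows "((\<lambda>t. G (t *\<^sub>R e) \<bullet> e) has_real_derivative ((M *v e) \<bullet> e)) (at t)"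
proof -
  have l: "((\<lambda>t. t *\<^sub>R e) has_derivative (\<lambda>h. h *\<^sub>R e)) (at t)"
    by (auto intro!: derivative_eq_intros)
  have "((\<lambda>t. G (t *\<^sub>R e)) has_derivative (\<lambda>h. M *v (h *\<^sub>R e))) (at t)"
    using has_derivative_compose[OF l assms] .
  hence "((\<lambda>t. G (t *\<^sub>R e) \<bullet> e) has_derivative (\<lambda>h. (M *v (h *\<^sub>R e)) \<bullet> e)) (at t)"
    by (rule has_derivative_inner_left)
  moreover have "(\<lambda>h. (M *v (h *\<^sub>R e)) \<bullet> e) = (*) ((M *v e) \<bullet> e)"
    by (auto simp: matrix_vector_mult_scaleR mult.commute)
  ultimately show ?thesis unfolding has_field_derivative_def by simp
qed

lemma vec_eq_inner:
  fixes a b :: "'a::real_inner"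
  assumes "\<And>h. a \<bullet> h = b \<bullet> h" shows "a = b"
proof -
  have "(a - b) \<bullet> (a - b) = 0" using assms[of "a - b"] by (simp add: inner_diff_left)
  thus ?thesis by simp
qed

lemma diag_mv: "(A *v axis i (1::real)) $ i = A $ i $ i"
  for A :: "real^'n^'n"
  by (simp add: matrix_vector_mult_basis column_def)

lemma radial_grad:
  fixes U :: "real^'n \<Rightarrow> real" and Ue :: "real \<Rightarrow> real" and DU :: "real^'n \<Rightarrow> real^'n"
  assumes rad: "\<And>y. U y = Ue (norm y)"
    and dU: "(U has_derivative (\<lambda>h. DU y \<bullet> h)) (at y)"
    and dUe: "(Ue has_real_derivative p) (at (norm y))"
    and y: "y \<noteq> 0"
  shows "DU y = (p / norm y) *\<^sub>R y"
proof -
  have "((\<lambda>y. Ue (norm y)) has_derivative (\<lambda>h. p * (h \<bullet> sgn y))) (at y)"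
    using has_derivative_compose[OF has_derivative_norm[OF y], of Ue "(*) p"] dUe
    unfolding has_field_derivative_def by simp
  moreover have "(\<lambda>y. Ue (norm y)) = U" using rad by auto
  ultimately have "(U has_derivative (\<lambda>h. p * (h \<bullet> sgn y))) (at y)" by simp
  from has_derivative_unique[OF dU this]
  have "\<And>h. DU y \<bullet> h = p * (h \<bullet> sgn y)" by metis
  hence "\<And>h. DU y \<bullet> h = ((p / norm y) *\<^sub>R y) \<bullet> h"
    by (simp add: sgn_div_norm inner_commute divide_inverse mult.assoc)
  thus ?thesis by (rule vec_eq_inner)
qed

lemma radial_trace:
  fixes DU :: "real^'n \<Rightarrow> real^'n" and M :: "real^'n^'n" and x :: "real^'n"
  assumes DUeq: "\<And>y. y \<noteq> 0 \<Longrightarrow> DU y = (p (norm y) / norm y) *\<^sub>R y"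
    and dDU: "(DU has_derivative (\<lambda>h. M *v h)) (at x)"
    and dp: "(p has_real_derivative P2) (at (norm x))"
    and x: "x \<noteq> 0"
  shows "(\<Sum>i\<in>UNIV. M $ i $ i) = P2 + (real CARD('n) - 1) * p (norm x) / norm x"
proof -
  define r where "r = norm x"
  have rpos: "r > 0" using x unfolding r_def by simp
  define \<psi> where "\<psi> t = p t / t" for t
  define \<psi>' where "\<psi>' = (P2 * r - p r) / r^2"
  have dpsi: "(\<psi> has_real_derivative \<psi>') (at r)"
    unfolding \<psi>_def[abs_def] \<psi>'_def using dp rpos unfolding r_def
    by (auto intro!: derivative_eq_intros simp: power2_eq_square)
  have df: "((\<lambda>y. \<psi> (norm y)) has_derivative (\<lambda>h. \<psi>' * (h \<bullet> sgn x))) (at x)"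
    using has_derivative_compose[OF has_derivative_norm[OF x], of \<psi> "(*) \<psi>'"] dpsi
    unfolding has_field_derivative_def r_def by simp
  have dPhi: "((\<lambda>y. \<psi> (norm y) *\<^sub>R y) has_derivative
      (\<lambda>h. \<psi> r *\<^sub>R h + (\<psi>' * (h \<bullet> sgn x)) *\<^sub>R x)) (at x)"
    using has_derivative_scaleR[OF df has_derivative_ident] unfolding r_def by simp
  have "(DU has_derivative (\<lambda>h. \<psi> r *\<^sub>R h + (\<psi>' * (h \<bullet> sgn x)) *\<^sub>R x)) (at x)"
  proof (rule has_derivative_transform_within_open[OF dPhi, of "- {0}"])
    show "open (- {0::real^'n})" by auto
    show "x \<in> - {0}" using x by simp
    fix y :: "real^'n" assume "y \<in> - {0}"
    thus "\<psi> (norm y) *\<^sub>R y = DU y" using DUeq[of y] unfolding \<psi>_def by simp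
  qed
  from has_derivative_unique[OF dDU this]
  have Mh: "\<And>h. M *v h = \<psi> r *\<^sub>R h + (\<psi>' * (h \<bullet> sgn x)) *\<^sub>R x" by metis
  have "(\<Sum>i\<in>UNIV. M $ i $ i) = (\<Sum>i\<in>UNIV. \<psi> r + \<psi>' * (sgn x $ i * x $ i))"
  proof (rule sum.cong[OF refl])
    fix i
    have "M $ i $ i = (M *v axis i 1) $ i" by (simp add: diag_mv)
    also have "\<dots> = \<psi> r + \<psi>' * (sgn x $ i * x $ i)"
      unfolding Mh by (simp add: inner_axis')
    finally show "M $ i $ i = \<psi> r + \<psi>' * (sgn x $ i * x $ i)" .
  qed
  also have "\<dots> = real CARD('n) * \<psi> r + \<psi>' * (sgn x \<bullet> x)"
    by (simp add: sum.distrib sum_distrib_left inner_vec_def)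
  also have "sgn x \<bullet> x = r" unfolding r_def using x
    by (simp add: sgn_div_norm power2_norm_eq_inner[symmetric] power2_eq_square)
  finally have tr: "(\<Sum>i\<in>UNIV. M $ i $ i) = real CARD('n) * \<psi> r + \<psi>' * r" .
  have e1: "\<psi>' * r = P2 - p r / r" unfolding \<psi>'_def using rpos by (simp add: field_simps power2_eq_square)
  have e2: "real CARD('n) * \<psi> r + (P2 - p r / r) = P2 + (real CARD('n) - 1) * p r / r"
    unfolding \<psi>_def by (simp add: algebra_simps diff_divide_distrib)
  show ?thesis using tr e1 e2 unfolding r_def by simp
qed

lemma radial_ode:
  fixes V :: "real^'n \<Rightarrow> real" and v :: "real \<Rightarrow> real" and m \<beta> :: real
  assumes radial: "\<forall>x. V x = v (norm x)" and pos: "\<forall>x. V x > 0" and sol: "classical_sol m \<beta> V"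
  shows "\<exists>p P2 v1. (\<forall>t>0. (v has_real_derivative v1 t) (at t) \<and>
      ((\<lambda>t. v t powr m) has_real_derivative p t) (at t) \<and> (p has_real_derivative P2 t) (at t) \<and>
      p t = m * v t powr (m - 1) * v1 t \<and>
      (real CARD('n) - 1) / m * (P2 t + (real CARD('n) - 1) * p t / t) + 2 * \<beta> / (1 - m) * v t
        + \<beta> * (t * v1 t) = 0) \<and>
      (\<forall>\<epsilon>>0. \<exists>t>0. \<bar>t * p t / v t powr m\<bar> < \<epsilon>)"
proof -
  obtain DV DU and D2U :: "real^'n \<Rightarrow> real^'n^'n" where
    cV: "continuous_on UNIV V" and cDV: "continuous_on UNIV DV" and
    cDU: "continuous_on UNIV DU" and
    dV: "\<And>x. (V has_derivative (\<lambda>h. DV x \<bullet> h)) (at x)" and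
    dU: "\<And>x. ((\<lambda>y. V y powr m) has_derivative (\<lambda>h. DU x \<bullet> h)) (at x)" and
    dDU: "\<And>x. (DU has_derivative (\<lambda>h. D2U x *v h)) (at x)" and
    eq: "\<And>x. (real CARD('n) - 1) / m * (\<Sum>i\<in>UNIV. D2U x $ i $ i)
              + 2 * \<beta> / (1 - m) * V x + \<beta> * (x \<bullet> DV x) = 0"
    using sol unfolding classical_sol_def by blast
  define e :: "real^'n" where "e = axis undefined 1"
  have ne: "norm e = 1" unfolding e_def by simp
  have Vray: "V (t *\<^sub>R e) = v t" if "t \<ge> 0" for t
    using radial that ne by simp
  have Urad: "V y powr m = (\<lambda>t. V (t *\<^sub>R e) powr m) (norm y)" for y
    using radial Vray[of "norm y"] by simp
  define p where "p t = DU (t *\<^sub>R e) \<bullet> e" for t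
  define P2 where "P2 t = (D2U (t *\<^sub>R e) *v e) \<bullet> e" for t
  define v1 where "v1 t = DV (t *\<^sub>R e) \<bullet> e" for t
  have dvray: "((\<lambda>t. V (t *\<^sub>R e)) has_real_derivative v1 t) (at t)" for t
    unfolding v1_def by (rule ray_deriv[OF dV])
  have duray: "((\<lambda>t. V (t *\<^sub>R e) powr m) has_real_derivative p t) (at t)" for t
    unfolding p_def by (rule ray_deriv[of "\<lambda>y. V y powr m", OF dU])
  have dp: "(p has_real_derivative P2 t) (at t)" for t
  proof -
    have "p = (\<lambda>t. DU (t *\<^sub>R e) \<bullet> e)" unfolding p_def by auto
    thus ?thesis unfolding P2_def using ray_deriv2[OF dDU] by simp
  qed
  have DUeq: "DU y = (p (norm y) / norm y) *\<^sub>R y" if "y \<noteq> 0" for y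
    by (rule radial_grad[of "\<lambda>y. V y powr m" "\<lambda>t. V (t *\<^sub>R e) powr m" DU y "p (norm y)", OF Urad dU[of y] duray[of "norm y"] that])
  have main: "(v has_real_derivative v1 t) (at t) \<and>
      ((\<lambda>t. v t powr m) has_real_derivative p t) (at t) \<and> (p has_real_derivative P2 t) (at t) \<and>
      p t = m * v t powr (m - 1) * v1 t \<and>
      (real CARD('n) - 1) / m * (P2 t + (real CARD('n) - 1) * p t / t) + 2 * \<beta> / (1 - m) * v t
        + \<beta> * (t * v1 t) = 0" if t: "t > 0" for t
  proof -
    define x where "x = t *\<^sub>R e"
    have x0: "x \<noteq> 0" and nx: "norm x = t" unfolding x_def using t ne by auto
    have tr: "(\<Sum>i\<in>UNIV. D2U x $ i $ i) = P2 t + (real CARD('n) - 1) * p t / t"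
      using radial_trace[OF DUeq dDU, of "P2 t" x] dp[of t] x0 nx by simp
    have dv: "(v has_real_derivative v1 t) (at t)"
      by (rule has_field_derivative_transform_within_open[OF dvray, of "{0<..}"]) (use t Vray in auto)
    have du: "((\<lambda>t. v t powr m) has_real_derivative p t) (at t)"
      by (rule has_field_derivative_transform_within_open[OF duray, of "{0<..}"]) (use t Vray in auto)
    have vpos: "v t > 0" using pos Vray[of t] t by (metis less_imp_le)
    have "p t = m * v t powr (m - 1) * v1 t"
      using DERIV_unique[OF du DERIV_fun_powr[OF dv vpos, of m]] by simp
    moreover have "x \<bullet> DV x = t * v1 t" unfolding x_def v1_def by (simp add: inner_commute)
    moreover have "V x = v t" unfolding x_def using Vray t by simp
    ultimately show ?thesis using eq[of x] tr dv du dp by simp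
  qed
  have small: "\<exists>t>0. \<bar>t * p t / v t powr m\<bar> < \<epsilon>" if ep: "\<epsilon> > 0" for \<epsilon>
  proof -
    have cDU': "isCont DU y" for y using cDU by (simp add: continuous_on_eq_continuous_at)
    have cV': "isCont V y" for y using cV by (simp add: continuous_on_eq_continuous_at)
    have l0: "((\<lambda>t::real. t *\<^sub>R e) \<longlongrightarrow> 0 *\<^sub>R e) (at 0)" by (intro tendsto_intros)
    have t1: "((\<lambda>t. DU (t *\<^sub>R e)) \<longlongrightarrow> DU (0 *\<^sub>R e)) (at 0)" by (rule isCont_tendsto_compose[OF cDU' l0])
    have t2: "((\<lambda>t. V (t *\<^sub>R e)) \<longlongrightarrow> V (0 *\<^sub>R e)) (at 0)" by (rule isCont_tendsto_compose[OF cV' l0])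
    have V0: "V (0 *\<^sub>R e) > 0" using pos by simp
    have "((\<lambda>t. t * (DU (t *\<^sub>R e) \<bullet> e) / V (t *\<^sub>R e) powr m) \<longlongrightarrow>
           0 * (DU (0 *\<^sub>R e) \<bullet> e) / V (0 *\<^sub>R e) powr m) (at 0)"
      using V0 by (intro tendsto_intros t1 t2) auto
    hence "eventually (\<lambda>t. dist (t * (DU (t *\<^sub>R e) \<bullet> e) / V (t *\<^sub>R e) powr m) 0 < \<epsilon>) (at 0)"
      using ep unfolding tendsto_iff by simp
    then obtain d where d: "d > 0" "\<And>t. t \<noteq> 0 \<Longrightarrow> dist t 0 < d \<Longrightarrow>
        dist (t * (DU (t *\<^sub>R e) \<bullet> e) / V (t *\<^sub>R e) powr m) 0 < \<epsilon>"
      unfolding eventually_at by auto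
    have "dist ((d/2) * (DU ((d/2) *\<^sub>R e) \<bullet> e) / V ((d/2) *\<^sub>R e) powr m) 0 < \<epsilon>"
      using d(2)[of "d/2"] d(1) by (simp add: dist_real_def)
    thus ?thesis using d(1) Vray[of "d/2"] unfolding p_def
      by (intro exI[of _ "d/2"]) (auto simp: dist_real_def)
  qed
  show ?thesis using main small by blast
qed


lemma ode_alg0:
  fixes r U0 V0 P Q D1 k m j \<beta> :: real
  assumes nz: "r \<noteq> 0" "U0 \<noteq> 0" "m \<noteq> 0" "j \<noteq> 0" "k \<noteq> 0" and j: "j = 1 - m"
    and D1: "D1 = P * V0 / (m * U0)"
    and ode: "k / m * (Q + k * P / r) + 2 * \<beta> / j * V0 + \<beta> * (r * D1) = 0"
  shows "j / m * (((r * P + Q * r * r) * U0 - r * P * (P * r)) / (U0 * U0)) =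
     (2 * (k - 1 - 4 * (m / j)) + 4 * (m / j))
     - (k - 1 - 4 * (m / j)) * (2 + j / m * (r * P / U0))
     - m / j * (2 + j / m * (r * P / U0))^2
     - \<beta> / k * (2 + j / m * (r * P / U0)) * (r^2 * V0 / U0)"
proof -
  have "k / m * (Q + k * P / r) = - (2 * \<beta> / j * V0 + \<beta> * (r * D1))"
    using ode by linarith
  hence Q: "Q = - (m * (2 * \<beta> / j * V0 + \<beta> * (r * D1)) / k) - k * P / r"
    using nz by (simp add: field_simps)
  have j': "m = 1 - j" using j by simp
  show ?thesis unfolding Q D1 using nz
    by (simp add: field_simps power2_eq_square)
qed
theorem corollary2p6:
  fixes V :: "real^'n \<Rightarrow> real" and v :: "real \<Rightarrow> real"
    and m lam \<beta> :: real
  defines "n \<equiv> real CARD('n)"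
  assumes n3: "CARD('n) \<ge> 3"
    and m_pos: "0 < m" and m_lt: "m < (n - 2) / n" and m_ne: "m \<noteq> (n - 2) / (n + 2)"
    and lam: "lam > 0" and beta: "\<beta> > 0"
    and radial: "\<forall>x. V x = v (norm x)"
    and pos: "\<forall>x. V x > 0"
    and sol: "classical_sol m \<beta> V"
    and init: "v 0 = lam"
  shows "\<exists>K::real.
     let w = (\<lambda>s. exp s ^ 2 * v (exp s) powr (1 - m));
         h = (\<lambda>s. w s - 2 * (n - 1) * (n - 2 - n * m) / ((1 - m) * \<beta>) * s);
         h1 = (\<lambda>s. h s + (n - 1) * (n - 2 - (n + 2) * m) / ((1 - m) * \<beta>) * ln s);
         C = (n - 1) * (n - 2 - (n + 2) * m)^2 / (2 * (n - 2 - n * m) * (1 - m) * \<beta>)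
     in (h1 \<longlongrightarrow> K) at_top \<and>
        (\<lambda>s. h1 s - K - C * (1 + ln s) / s) \<in> o[at_top](\<lambda>s. (1 + ln s) / s)"
proof -
  obtain p P2 v1 where
    ode: "\<And>t. t > 0 \<Longrightarrow> (v has_real_derivative v1 t) (at t) \<and>
      ((\<lambda>t. v t powr m) has_real_derivative p t) (at t) \<and> (p has_real_derivative P2 t) (at t) \<and>
      p t = m * v t powr (m - 1) * v1 t \<and>
      (real CARD('n) - 1) / m * (P2 t + (real CARD('n) - 1) * p t / t) + 2 * \<beta> / (1 - m) * v t
        + \<beta> * (t * v1 t) = 0"
    and small: "\<And>\<epsilon>. \<epsilon> > 0 \<Longrightarrow> \<exists>t>0. \<bar>t * p t / v t powr m\<bar> < \<epsilon>"
    using radial_ode[OF radial pos sol] by blast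
  have n3': "n \<ge> 3" unfolding n_def using n3 by simp
  have nm: "n - 2 - n * m > 0" using m_lt n3' by (simp add: field_simps)
  have "m * n < 1 * n" using nm by (simp add: algebra_simps)
  hence m1: "m < 1" using n3' mult_right_less_imp_less[of m n 1] by simp
  define j where "j = 1 - m"
  define k where "k = n - 1"
  have jpos: "j > 0" and kpos: "k > 0" unfolding j_def k_def using m1 n3' by auto
  define q where "q = m / j"
  define c1 where "c1 = k - 1 - 4 * q"
  define A0 where "A0 = 2 * c1 + 4 * q"
  define \<kappa> where "\<kappa> = \<beta> / k"
  define u where "u t = v t powr m" for t
  define w where "w s = exp s ^ 2 * v (exp s) powr (1 - m)" for s
  define g where "g s = 2 + j / m * (exp s * p (exp s) / u (exp s))" for s
  have vpos: "v t > 0" if "t \<ge> 0" for t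
    using pos radial[rule_format, of "t *\<^sub>R axis undefined 1"] that by (metis norm_axis_1 norm_scaleR abs_of_nonneg mult_1_right)
  have upos: "u t > 0" if "t \<ge> 0" for t unfolding u_def using vpos[OF that] by simp
  have wpos: "w s > 0" for s unfolding w_def using vpos[of "exp s"] by simp
  have weq: "w s = exp s ^ 2 * v (exp s) / u (exp s)" for s
    unfolding w_def u_def using vpos[of "exp s"] by (simp add: powr_diff)
  have rel: "v1 t = p t * v t / (m * u t)" if "t > 0" for t
  proof -
    have "p t = m * v t powr (m - 1) * v1 t" using ode[OF that] by blast
    also have "v t powr (m - 1) = u t / v t" unfolding u_def using vpos[of t] that by (simp add: powr_diff)
    finally show ?thesis using m_pos upos[of t] vpos[of t] that by (simp add: field_simps)
  qed
  have dve: "((\<lambda>s. v (exp s)) has_real_derivative v1 (exp s) * exp s) (at s)" for s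
  proof -
    have h: "(v has_real_derivative v1 (exp s)) (at (exp s))" using ode[of "exp s"] by simp
    show ?thesis using DERIV_chain2[OF h DERIV_exp] .
  qed
  have due: "((\<lambda>s. u (exp s)) has_real_derivative p (exp s) * exp s) (at s)" for s
  proof -
    have h: "((\<lambda>t. v t powr m) has_real_derivative p (exp s)) (at (exp s))" using ode[OF exp_gt_zero[of s]] by blast
    show ?thesis unfolding u_def using DERIV_chain2[OF h DERIV_exp] .
  qed
  have dpe: "((\<lambda>s. p (exp s)) has_real_derivative P2 (exp s) * exp s) (at s)" for s
  proof -
    have h: "(p has_real_derivative P2 (exp s)) (at (exp s))" using ode[OF exp_gt_zero[of s]] by blast
    show ?thesis using DERIV_chain2[OF h DERIV_exp] .
  qed
  have dw: "(w has_real_derivative g s * w s) (at s)" for s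
  proof -
    define r where "r = exp s"
    have rpos: "r > 0" unfolding r_def by simp
    have d1: "((\<lambda>s. exp s ^ 2) has_real_derivative 2 * exp s * exp s) (at s)"
      by (auto intro!: derivative_eq_intros simp: power2_eq_square)
    have "((\<lambda>s. exp s ^ 2 * v (exp s) / u (exp s)) has_real_derivative
       ((2 * exp s * exp s * v (exp s) + exp s ^ 2 * (v1 (exp s) * exp s)) * u (exp s)
         - exp s ^ 2 * v (exp s) * (p (exp s) * exp s)) / (u (exp s) * u (exp s))) (at s)"
      using DERIV_divide[OF DERIV_mult[OF d1 dve] due] upos[of "exp s"]
      by (simp add: algebra_simps)
    moreover have "(\<lambda>s. exp s ^ 2 * v (exp s) / u (exp s)) = w" using weq by auto
    moreover have "((2 * exp s * exp s * v (exp s) + exp s ^ 2 * (v1 (exp s) * exp s)) * u (exp s)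
         - exp s ^ 2 * v (exp s) * (p (exp s) * exp s)) / (u (exp s) * u (exp s)) = g s * w s"
      unfolding g_def weq r_def[symmetric] rel[OF rpos] j_def using rpos upos[of r] vpos[of r] m_pos
      by (simp add: field_simps power2_eq_square)
    ultimately show ?thesis by simp
  qed
  have dg: "(g has_real_derivative (A0 - c1 * g s - q * (g s)^2 - \<kappa> * g s * w s)) (at s)" for s
  proof -
    define r where "r = exp s"
    have rpos: "r > 0" unfolding r_def by simp
    have "(g has_real_derivative (0 + j / m * (((exp s * p (exp s) + P2 (exp s) * exp s * exp s) * u (exp s)
        - exp s * p (exp s) * (p (exp s) * exp s)) / (u (exp s) * u (exp s))))) (at s)"
    proof -
      have "((\<lambda>s. exp s * p (exp s)) has_real_derivative exp s * p (exp s) + P2 (exp s) * exp s * exp s) (at s)"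
        using DERIV_mult[OF DERIV_exp dpe] by (simp add: algebra_simps)
      from DERIV_add[OF DERIV_const DERIV_cmult[OF DERIV_divide[OF this due]], of 2 "j / m"] upos[of "exp s"]
      show ?thesis unfolding g_def[abs_def] by simp
    qed
    moreover have "0 + j / m * (((exp s * p (exp s) + P2 (exp s) * exp s * exp s) * u (exp s)
        - exp s * p (exp s) * (p (exp s) * exp s)) / (u (exp s) * u (exp s)))
        = A0 - c1 * g s - q * (g s)^2 - \<kappa> * g s * w s"
    proof -
      have o: "(real CARD('n) - 1) / m * (P2 r + (real CARD('n) - 1) * p r / r) + 2 * \<beta> / (1 - m) * v r
        + \<beta> * (r * v1 r) = 0" using ode[OF rpos] by blast
      have "k / m * (P2 r + k * p r / r) + 2 * \<beta> / j * v r + \<beta> * (r * v1 r) = 0"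
        using o unfolding k_def j_def n_def .
      from ode_alg0[of r "u r" m j k "v1 r" "p r" "v r" "P2 r" \<beta>, OF _ _ _ _ _ _ rel[OF rpos] this]
      have "j / m * (((r * p r + P2 r * r * r) * u r - r * p r * (p r * r)) / (u r * u r)) =
         (2 * (k - 1 - 4 * (m / j)) + 4 * (m / j))
         - (k - 1 - 4 * (m / j)) * (2 + j / m * (r * p r / u r))
         - m / j * (2 + j / m * (r * p r / u r))^2
         - \<beta> / k * (2 + j / m * (r * p r / u r)) * (r^2 * v r / u r)"
        using rpos upos[of r] m_pos jpos kpos j_def by auto
      thus ?thesis unfolding A0_def c1_def q_def \<kappa>_def g_def weq r_def[symmetric] by simp
    qed
    ultimately show ?thesis by simp
  qed
  have qpos: "q > 0" unfolding q_def using m_pos jpos by simp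
  obtain t0 where t0: "t0 > 0" "\<bar>t0 * p t0 / v t0 powr m\<bar> < 2 * q" using small[of "2 * q"] qpos by auto
  have g1: "g (ln t0) > 0"
  proof -
    have "j / m * (t0 * p t0 / u t0) > - 2"
    proof -
      have "t0 * p t0 / u t0 > - 2 * q" using t0(2) unfolding u_def abs_less_iff by linarith
      hence "j / m * (t0 * p t0 / u t0) > j / m * (- 2 * q)" using jpos m_pos by (intro mult_strict_left_mono) auto
      also have "j / m * (- 2 * q) = - 2" unfolding q_def using jpos m_pos by (simp add: field_simps)
      finally show ?thesis .
    qed
    thus ?thesis unfolding g_def using t0 by simp
  qed
  have cpos: "c1 + 2 * q > 0"
  proof -
    have "c1 + 2 * q = ((k - 1) * j - 2 * m) / j" unfolding c1_def q_def using jpos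
      by (simp add: field_simps)
    moreover have "(k - 1) * j - 2 * m = n - 2 - n * m" unfolding k_def j_def by (simp add: algebra_simps)
    ultimately have "c1 + 2 * q = (n - 2 - n * m) / j" by simp
    thus ?thesis using nm jpos by simp
  qed
  interpret O: odesys w g A0 c1 q \<kappa> "ln t0"
    by unfold_locales (use beta kpos qpos cpos wpos dw dg g1 in \<open>auto simp: \<kappa>_def A0_def\<close>)
  obtain K where K: "((\<lambda>s. w s - O.aa * s + O.B * ln s) \<longlongrightarrow> K) at_top"
    "(\<lambda>s. w s - O.aa * s + O.B * ln s - K - (O.B^2/O.aa) * (1 + ln s) / s) \<in> o[at_top](\<lambda>s. (1 + ln s) / s)"
    using O.asym by blast
  have p1: "(k - 1) * j - 2 * m = n - 2 - n * m" unfolding k_def j_def by (simp add: algebra_simps)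
  have p2: "(k - 1) * j - 4 * m = n - 2 - (n + 2) * m" unfolding k_def j_def by (simp add: algebra_simps)
  have aa0: "O.aa = A0 / \<kappa>" by (rule O.aa_def)
  have B0: "O.B = c1 / \<kappa>" by (rule O.B_def)
  have "A0 / \<kappa> = 2 * k * ((k - 1) * j - 2 * m) / (j * \<beta>)"
    unfolding A0_def c1_def q_def \<kappa>_def using jpos kpos beta by (simp add: field_simps)
  hence aa: "O.aa = 2 * (n - 1) * (n - 2 - n * m) / ((1 - m) * \<beta>)"
    unfolding aa0 p1 unfolding k_def j_def .
  have "c1 / \<kappa> = k * ((k - 1) * j - 4 * m) / (j * \<beta>)"
    unfolding c1_def q_def \<kappa>_def using jpos kpos beta by (simp add: field_simps)
  hence BB: "O.B = (n - 1) * (n - 2 - (n + 2) * m) / ((1 - m) * \<beta>)"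
    unfolding B0 p2 unfolding k_def j_def .
  have CC: "O.B^2/O.aa = (n - 1) * (n - 2 - (n + 2) * m)^2 / (2 * (n - 2 - n * m) * (1 - m) * \<beta>)"
  proof -
    have gen: "\<And>X Y Z W b :: real. X \<noteq> 0 \<Longrightarrow> Y \<noteq> 0 \<Longrightarrow> Z \<noteq> 0 \<Longrightarrow> b \<noteq> 0 \<Longrightarrow>
       (X * W / (Z * b))^2 / (2 * X * Y / (Z * b)) = X * W^2 / (2 * Y * Z * b)"
      by (simp add: field_simps power2_eq_square)
    show ?thesis unfolding aa BB using m1 beta n3' nm by (intro gen) auto
  qed
  have wdef: "w = (\<lambda>s. exp s ^ 2 * v (exp s) powr (1 - m))" unfolding w_def by auto
  show ?thesis unfolding Let_def
    using K unfolding CC unfolding aa BB wdef by (intro exI[of _ K]) simp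
qed

end
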